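(* Let $X,Y,Z,W$ be real-valued random variables on an atomless probability space (no integrability assumed). If $X\le_{\rm cx}Z$ and $Y\le_{\rm cx}W$, then $$X+Y\le_{\rm cx} Z^{\rm co}+W^{\rm co},$$ where $(Z^{\rm co},W^{\rm co})$ is a comonotonic version of $(Z,W)$.
   Context: An expectation $\mathbb E[V]$ is well-defined if $\mathbb E[\max\{V,0\}]<\infty$ or $\mathbb E[\max\{-V,0\}]<\infty$. We write $U\le_{\rm cx}V$ if $\mathbb E[u(U)]\le\mathbb E[u(V)]$ for all convex $u:\mathbb R\to\mathbb R$ such that both expectations are well-defined. A pair $(Z',W')$ is comonotonic if $Z'=f(S)$, $W'=g(S)$ a.s. for some random variable $S$ and increasing functions $f,g$; a comonotonic version of $(Z,W)$ is a comonotonic pair $(Z',W')$ with $Z'$ distributed as $Z$ and $W'$ distributed as $W$. *)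

theory Defs
  imports "HOL-Probability.Probability"
begin

definition exp_well_defined :: "'a measure \<Rightarrow> ('a \<Rightarrow> real) \<Rightarrow> bool" where
  "exp_well_defined M V \<longleftrightarrow>
     (\<integral>\<^sup>+ x. ennreal (max (V x) 0) \<partial>M) < \<infinity> \<or> (\<integral>\<^sup>+ x. ennreal (max (- V x) 0) \<partial>M) < \<infinity>"

definition gen_expectation :: "'a measure \<Rightarrow> ('a \<Rightarrow> real) \<Rightarrow> ereal" where
  "gen_expectation M V =
     enn2ereal (\<integral>\<^sup>+ x. ennreal (max (V x) 0) \<partial>M) - enn2ereal (\<integral>\<^sup>+ x. ennreal (max (- V x) 0) \<partial>M)"

definition cx_le :: "'a measure \<Rightarrow> ('a \<Rightarrow> real) \<Rightarrow> 'b measure \<Rightarrow> ('b \<Rightarrow> real) \<Rightarrow> bool" where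
  "cx_le M U N V \<longleftrightarrow>
     (\<forall>u::real \<Rightarrow> real. convex_on UNIV u \<longrightarrow>
        exp_well_defined M (\<lambda>x. u (U x)) \<longrightarrow> exp_well_defined N (\<lambda>x. u (V x)) \<longrightarrow>
        gen_expectation M (\<lambda>x. u (U x)) \<le> gen_expectation N (\<lambda>x. u (V x)))"

definition atomless :: "'a measure \<Rightarrow> bool" where
  "atomless M \<longleftrightarrow>
     (\<forall>A\<in>sets M. 0 < emeasure M A \<longrightarrow>
        (\<exists>B\<in>sets M. B \<subseteq> A \<and> 0 < emeasure M B \<and> emeasure M B < emeasure M A))"

definition comonotonic :: "'a measure \<Rightarrow> ('a \<Rightarrow> real) \<Rightarrow> ('a \<Rightarrow> real) \<Rightarrow> bool" where
  "comonotonic N Z' W' \<longleftrightarrow>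
     (\<exists>(S::'a \<Rightarrow> real) (f::real \<Rightarrow> real) (g::real \<Rightarrow> real).
        S \<in> borel_measurable N \<and> mono f \<and> mono g \<and>
        (AE \<omega> in N. Z' \<omega> = f (S \<omega>) \<and> W' \<omega> = g (S \<omega>)))"

end

theory Submission
  imports Defs
begin


lemma chain_split:
  fixes f g :: "real \<Rightarrow> real" and t :: real
  assumes mf: "mono f" and mg: "mono g"
  shows "\<exists>t1. \<forall>s. (f s + g s \<le> t \<longrightarrow> f s \<le> t1 \<and> g s \<le> t - t1) \<and>
                  (f s + g s > t \<longrightarrow> f s \<ge> t1 \<and> g s \<ge> t - t1)"
proof -
  define Lo where "Lo = {f s | s. f s + g s \<le> t} \<union> {t - g s | s. f s + g s > t}"
  define Up where "Up = {t - g s | s. f s + g s \<le> t} \<union> {f s | s. f s + g s > t}"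
  have ne: "Lo \<noteq> {}"
  proof (cases "f 0 + g 0 \<le> t")
    case True then have "f 0 \<in> Lo" unfolding Lo_def by blast
    then show ?thesis by blast
  next
    case False then have "t - g 0 \<in> Lo" unfolding Lo_def by (auto simp: not_le)
    then show ?thesis by blast
  qed
  have neU: "Up \<noteq> {}"
  proof (cases "f 0 + g 0 \<le> t")
    case True then have "t - g 0 \<in> Up" unfolding Up_def by blast
    then show ?thesis by blast
  next
    case False then have "f 0 \<in> Up" unfolding Up_def by (auto simp: not_le)
    then show ?thesis by blast
  qed
  have key: "l \<le> v" if "l \<in> Lo" "v \<in> Up" for l v
  proof -
    have mf': "f x \<le> f y" if "x \<le> y" for x y using mf that by (rule monoD)
    have mg': "g x \<le> g y" if "x \<le> y" for x y using mg that by (rule monoD)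
    have c1: "f s1 + g s2 \<le> t" if "f s1 + g s1 \<le> t" "f s2 + g s2 \<le> t" for s1 s2
      using that mf'[of s1 s2] mg'[of s2 s1] by linarith
    have c2: "f s1 \<le> f s2" if "f s1 + g s1 \<le> t" "f s2 + g s2 > t" for s1 s2
      using that mf'[of s1 s2] mf'[of s2 s1] mg'[of s2 s1] by linarith
    have c3: "g s2 \<le> g s1" if "f s1 + g s1 > t" "f s2 + g s2 \<le> t" for s1 s2
      using that mg'[of s2 s1] mf'[of s1 s2] mg'[of s1 s2] by linarith
    have c4: "t \<le> f s2 + g s1" if "f s1 + g s1 > t" "f s2 + g s2 > t" for s1 s2
      using that mf'[of s1 s2] mg'[of s2 s1] by linarith
    from that(1) consider (a) s1 where "l = f s1" "f s1 + g s1 \<le> t" | (b) s1 where "l = t - g s1" "f s1 + g s1 > t"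
      unfolding Lo_def by blast
    then show ?thesis
    proof cases
      case a
      from that(2) consider (c) s2 where "v = t - g s2" "f s2 + g s2 \<le> t" | (d) s2 where "v = f s2" "f s2 + g s2 > t"
        unfolding Up_def by blast
      then show ?thesis
      proof cases
        case c then show ?thesis using a c1[of s1 s2] by simp
      next
        case d then show ?thesis using a c2[of s1 s2] by simp
      qed
    next
      case b
      from that(2) consider (c) s2 where "v = t - g s2" "f s2 + g s2 \<le> t" | (d) s2 where "v = f s2" "f s2 + g s2 > t"
        unfolding Up_def by blast
      then show ?thesis
      proof cases
        case c then show ?thesis using b c3[of s1 s2] by simp
      next
        case d then show ?thesis using b c4[of s1 s2] by simp
      qed
    qed
  qed
  have bdd: "bdd_above Lo" using neU key by (meson bdd_above.I equals0I)
  define t1 where "t1 = Sup Lo"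
  have lo: "l \<le> t1" if "l \<in> Lo" for l using that bdd unfolding t1_def by (rule cSup_upper)
  have up: "t1 \<le> v" if "v \<in> Up" for v using ne key that unfolding t1_def by (meson cSup_least)
  show ?thesis
  proof (intro exI allI conjI impI)
    fix s
    show "f s \<le> t1" if "f s + g s \<le> t" using lo[of "f s"] that unfolding Lo_def by auto
    show "g s \<le> t - t1" if "f s + g s \<le> t"
    proof -
      have "t - g s \<in> Up" using that unfolding Up_def by blast
      then show ?thesis using up by force
    qed
    show "f s \<ge> t1" if "f s + g s > t" using up[of "f s"] that unfolding Up_def by auto
    show "g s \<ge> t - t1" if "f s + g s > t"
    proof -
      have "t - g s \<in> Lo" using that unfolding Lo_def by blast
      then show ?thesis using lo by force
    qed
  qed
qed



lemma enn_max0: "ennreal (max x 0) = ennreal x"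
  by (cases "x \<ge> 0") (auto simp: max_def ennreal_neg)

lemma gen_exp_nonneg:
  assumes "\<And>x. f x \<ge> 0"
  shows "gen_expectation M f = enn2ereal (\<integral>\<^sup>+ x. ennreal (f x) \<partial>M)"
proof -
  have "(\<integral>\<^sup>+ x. ennreal (max (- f x) 0) \<partial>M) = 0"
    using assms by (simp add: max_def ennreal_neg)
  then show ?thesis unfolding gen_expectation_def by (simp add: enn_max0 zero_ennreal.rep_eq)
qed

lemma exp_wd_nonneg: "(\<And>x. f x \<ge> 0) \<Longrightarrow> exp_well_defined M f"
  unfolding exp_well_defined_def by (simp add: max_def ennreal_neg)

lemma cx_le_nonneg:
  assumes "cx_le M X N Z" "convex_on UNIV u" "\<And>x. u x \<ge> 0"
  shows "(\<integral>\<^sup>+ x. ennreal (u (X x)) \<partial>M) \<le> (\<integral>\<^sup>+ x. ennreal (u (Z x)) \<partial>N)"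
proof -
  have "gen_expectation M (\<lambda>x. u (X x)) \<le> gen_expectation N (\<lambda>x. u (Z x))"
    using assms unfolding cx_le_def by (simp add: exp_wd_nonneg)
  then show ?thesis using assms(3) by (simp add: gen_exp_nonneg less_eq_ennreal.rep_eq)
qed

lemma convex_hinge: "convex_on UNIV (\<lambda>x::real. max (x - t) 0)"
  unfolding convex_on_def
proof (intro conjI ballI allI impI)
  fix x y u v :: real assume "0 \<le> u" "0 \<le> v" "u + v = 1"
  note uv = this
  have a: "u * (x - t) \<le> u * max (x - t) 0" "v * (y - t) \<le> v * max (y - t) 0"
    using uv by (simp_all add: mult_left_mono)
  have b: "0 \<le> u * max (x - t) 0" "0 \<le> v * max (y - t) 0" using uv by simp_all
  have c: "u *\<^sub>R x + v *\<^sub>R y - t = u * (x - t) + v * (y - t)"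
  proof -
    have "t = (u + v) * t" using uv(3) by simp
    then show ?thesis by (simp add: algebra_simps)
  qed
  show "max (u *\<^sub>R x + v *\<^sub>R y - t) 0 \<le> u * max (x - t) 0 + v * max (y - t) 0"
    unfolding c using a b by simp
qed simp

lemma convex_hinge': "convex_on UNIV (\<lambda>x::real. max (t - x) 0)"
  unfolding convex_on_def
proof (intro conjI ballI allI impI)
  fix x y u v :: real assume "0 \<le> u" "0 \<le> v" "u + v = 1"
  note uv = this
  have a: "u * (t - x) \<le> u * max (t - x) 0" "v * (t - y) \<le> v * max (t - y) 0"
    using uv by (simp_all add: mult_left_mono)
  have b: "0 \<le> u * max (t - x) 0" "0 \<le> v * max (t - y) 0" using uv by simp_all
  have c: "t - (u *\<^sub>R x + v *\<^sub>R y) = u * (t - x) + v * (t - y)"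
  proof -
    have "t = (u + v) * t" using uv(3) by simp
    then show ?thesis by (simp add: algebra_simps)
  qed
  show "max (t - (u *\<^sub>R x + v *\<^sub>R y)) 0 \<le> u * max (t - x) 0 + v * max (t - y) 0"
    unfolding c using a b by simp
qed simp

lemma cx_le_hinge:
  assumes "cx_le M X N Z"
  shows "(\<integral>\<^sup>+ x. ennreal (X x - t) \<partial>M) \<le> (\<integral>\<^sup>+ x. ennreal (Z x - t) \<partial>N)"
    and "(\<integral>\<^sup>+ x. ennreal (t - X x) \<partial>M) \<le> (\<integral>\<^sup>+ x. ennreal (t - Z x) \<partial>N)"
  using cx_le_nonneg[OF assms convex_hinge[of t]] cx_le_nonneg[OF assms convex_hinge'[of t]]
  by (simp_all add: enn_max0)



lemma enn_add_le: "ennreal (a + b) \<le> ennreal a + ennreal b"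
proof -
  have "ennreal (a + b) \<le> ennreal (max a 0 + max b 0)" by (rule ennreal_leI) simp
  also have "\<dots> = ennreal a + ennreal b" by (simp add: enn_max0)
  finally show ?thesis .
qed

lemma nn_distr_transfer:
  assumes "V \<in> borel_measurable N" "U \<in> borel_measurable M"
    and "distr N borel V = distr M borel U" and h: "h \<in> borel_measurable borel"
  shows "(\<integral>\<^sup>+\<omega>. ennreal (h (V \<omega>)) \<partial>N) = (\<integral>\<^sup>+\<omega>. ennreal (h (U \<omega>)) \<partial>M)"
proof -
  have "(\<integral>\<^sup>+\<omega>. ennreal (h (V \<omega>)) \<partial>N) = (\<integral>\<^sup>+x. ennreal (h x) \<partial>distr N borel V)"
    using assms by (subst nn_integral_distr) auto
  also have "\<dots> = (\<integral>\<^sup>+x. ennreal (h x) \<partial>distr M borel U)" using assms(3) by simp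
  also have "\<dots> = (\<integral>\<^sup>+\<omega>. ennreal (h (U \<omega>)) \<partial>M)"
    using assms by (subst nn_integral_distr) auto
  finally show ?thesis .
qed

lemma stoploss_sum:
  assumes mX: "X \<in> borel_measurable M" and mY: "Y \<in> borel_measurable M"
    and mZ: "Z \<in> borel_measurable M" and mW: "W \<in> borel_measurable M"
    and mZc: "Zco \<in> borel_measurable N" and mWc: "Wco \<in> borel_measurable N"
    and cxX: "cx_le M X M Z" and cxY: "cx_le M Y M W"
    and com: "comonotonic N Zco Wco"
    and dZ: "distr N borel Zco = distr M borel Z" and dW: "distr N borel Wco = distr M borel W"
  shows "(\<integral>\<^sup>+\<omega>. ennreal (X \<omega> + Y \<omega> - t) \<partial>M) \<le> (\<integral>\<^sup>+\<omega>. ennreal (Zco \<omega> + Wco \<omega> - t) \<partial>N)"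
    and "(\<integral>\<^sup>+\<omega>. ennreal (t - (X \<omega> + Y \<omega>)) \<partial>M) \<le> (\<integral>\<^sup>+\<omega>. ennreal (t - (Zco \<omega> + Wco \<omega>)) \<partial>N)"
proof -
  from com obtain S0 :: "_ \<Rightarrow> real" and f g where mf: "mono f" and mg: "mono g"
    and ae: "AE \<omega> in N. Zco \<omega> = f (S0 \<omega>) \<and> Wco \<omega> = g (S0 \<omega>)"
    unfolding comonotonic_def by blast
  from chain_split[OF mf mg, of t] obtain t1 where t1:
    "\<And>s. f s + g s \<le> t \<Longrightarrow> f s \<le> t1 \<and> g s \<le> t - t1"
    "\<And>s. f s + g s > t \<Longrightarrow> f s \<ge> t1 \<and> g s \<ge> t - t1" by blast
  define t2 where "t2 = t - t1"
  have sp: "ennreal (f s + g s - t) = ennreal (f s - t1) + ennreal (g s - t2)"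
    and sp': "ennreal (t - (f s + g s)) = ennreal (t1 - f s) + ennreal (t2 - g s)" for s
  proof -
    have "ennreal (f s + g s - t) = ennreal (f s - t1) + ennreal (g s - t2) \<and>
          ennreal (t - (f s + g s)) = ennreal (t1 - f s) + ennreal (t2 - g s)"
    proof (cases "f s + g s \<le> t")
      case True
      with t1(1)[OF this] show ?thesis unfolding t2_def
        by (auto simp: ennreal_neg simp flip: ennreal_plus)
    next
      case False
      with t1(2)[of s] show ?thesis unfolding t2_def
        by (auto simp: ennreal_neg simp flip: ennreal_plus)
    qed
    then show "ennreal (f s + g s - t) = ennreal (f s - t1) + ennreal (g s - t2)"
      "ennreal (t - (f s + g s)) = ennreal (t1 - f s) + ennreal (t2 - g s)" by auto
  qed
  have aeS: "AE \<omega> in N. ennreal (Zco \<omega> + Wco \<omega> - t) = ennreal (Zco \<omega> - t1) + ennreal (Wco \<omega> - t2)"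
    using ae by eventually_elim (simp add: sp)
  have aeS': "AE \<omega> in N. ennreal (t - (Zco \<omega> + Wco \<omega>)) = ennreal (t1 - Zco \<omega>) + ennreal (t2 - Wco \<omega>)"
    using ae by eventually_elim (simp add: sp')
  have "(\<integral>\<^sup>+\<omega>. ennreal (X \<omega> + Y \<omega> - t) \<partial>M) \<le> (\<integral>\<^sup>+\<omega>. ennreal (X \<omega> - t1) + ennreal (Y \<omega> - t2) \<partial>M)"
    by (rule nn_integral_mono) (metis enn_add_le add_diff_add t2_def add_diff_cancel_left')
  also have "\<dots> = (\<integral>\<^sup>+\<omega>. ennreal (X \<omega> - t1) \<partial>M) + (\<integral>\<^sup>+\<omega>. ennreal (Y \<omega> - t2) \<partial>M)"
    using mX mY by (intro nn_integral_add) auto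
  also have "\<dots> \<le> (\<integral>\<^sup>+\<omega>. ennreal (Z \<omega> - t1) \<partial>M) + (\<integral>\<^sup>+\<omega>. ennreal (W \<omega> - t2) \<partial>M)"
    by (intro add_mono cx_le_hinge cxX cxY)
  also have "\<dots> = (\<integral>\<^sup>+\<omega>. ennreal (Zco \<omega> - t1) \<partial>N) + (\<integral>\<^sup>+\<omega>. ennreal (Wco \<omega> - t2) \<partial>N)"
    using nn_distr_transfer[OF mZc mZ dZ, of "\<lambda>x. x - t1"] nn_distr_transfer[OF mWc mW dW, of "\<lambda>x. x - t2"]
    by simp
  also have "\<dots> = (\<integral>\<^sup>+\<omega>. ennreal (Zco \<omega> - t1) + ennreal (Wco \<omega> - t2) \<partial>N)"
    using mZc mWc by (intro nn_integral_add[symmetric]) auto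
  also have "\<dots> = (\<integral>\<^sup>+\<omega>. ennreal (Zco \<omega> + Wco \<omega> - t) \<partial>N)"
    using aeS by (intro nn_integral_cong_AE) auto
  finally show "(\<integral>\<^sup>+\<omega>. ennreal (X \<omega> + Y \<omega> - t) \<partial>M) \<le> (\<integral>\<^sup>+\<omega>. ennreal (Zco \<omega> + Wco \<omega> - t) \<partial>N)" .
  have "(\<integral>\<^sup>+\<omega>. ennreal (t - (X \<omega> + Y \<omega>)) \<partial>M) \<le> (\<integral>\<^sup>+\<omega>. ennreal (t1 - X \<omega>) + ennreal (t2 - Y \<omega>) \<partial>M)"
  proof (rule nn_integral_mono)
    fix \<omega> have "t - (X \<omega> + Y \<omega>) = (t1 - X \<omega>) + (t2 - Y \<omega>)" unfolding t2_def by simp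
    then show "ennreal (t - (X \<omega> + Y \<omega>)) \<le> ennreal (t1 - X \<omega>) + ennreal (t2 - Y \<omega>)"
      by (subst \<open>t - (X \<omega> + Y \<omega>) = (t1 - X \<omega>) + (t2 - Y \<omega>)\<close>) (rule enn_add_le)
  qed
  also have "\<dots> = (\<integral>\<^sup>+\<omega>. ennreal (t1 - X \<omega>) \<partial>M) + (\<integral>\<^sup>+\<omega>. ennreal (t2 - Y \<omega>) \<partial>M)"
    using mX mY by (intro nn_integral_add) auto
  also have "\<dots> \<le> (\<integral>\<^sup>+\<omega>. ennreal (t1 - Z \<omega>) \<partial>M) + (\<integral>\<^sup>+\<omega>. ennreal (t2 - W \<omega>) \<partial>M)"
    by (intro add_mono cx_le_hinge cxX cxY)
  also have "\<dots> = (\<integral>\<^sup>+\<omega>. ennreal (t1 - Zco \<omega>) \<partial>N) + (\<integral>\<^sup>+\<omega>. ennreal (t2 - Wco \<omega>) \<partial>N)"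
    using nn_distr_transfer[OF mZc mZ dZ, of "\<lambda>x. t1 - x"] nn_distr_transfer[OF mWc mW dW, of "\<lambda>x. t2 - x"]
    by simp
  also have "\<dots> = (\<integral>\<^sup>+\<omega>. ennreal (t1 - Zco \<omega>) + ennreal (t2 - Wco \<omega>) \<partial>N)"
    using mZc mWc by (intro nn_integral_add[symmetric]) auto
  also have "\<dots> = (\<integral>\<^sup>+\<omega>. ennreal (t - (Zco \<omega> + Wco \<omega>)) \<partial>N)"
    using aeS' by (intro nn_integral_cong_AE) auto
  finally show "(\<integral>\<^sup>+\<omega>. ennreal (t - (X \<omega> + Y \<omega>)) \<partial>M) \<le> (\<integral>\<^sup>+\<omega>. ennreal (t - (Zco \<omega> + Wco \<omega>)) \<partial>N)" .
qed



definition tt :: "real \<Rightarrow> real \<Rightarrow> nat \<Rightarrow> real" where "tt a h i = a + real i * h"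
definition sl :: "(real \<Rightarrow> real) \<Rightarrow> real \<Rightarrow> real \<Rightarrow> nat \<Rightarrow> real" where
  "sl \<phi> a h i = (\<phi> (tt a h (Suc i)) - \<phi> (tt a h i)) / h"
definition cc :: "(real \<Rightarrow> real) \<Rightarrow> real \<Rightarrow> real \<Rightarrow> nat \<Rightarrow> real" where
  "cc \<phi> a h i = (if i = 0 then sl \<phi> a h 0 else sl \<phi> a h i - sl \<phi> a h (i - 1))"
definition JJ :: "(real \<Rightarrow> real) \<Rightarrow> real \<Rightarrow> real \<Rightarrow> nat \<Rightarrow> real \<Rightarrow> real" where
  "JJ \<phi> a h m x = (\<Sum>j<m. cc \<phi> a h j * max (x - tt a h (Suc j)) 0)"

lemma sw: "(a - b) / (c - d) = (b - a) / (d - c)" for a b c d :: real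
  by (metis minus_diff_eq minus_divide_divide)

lemma tt_Suc: "tt a h (Suc i) = tt a h i + h" by (simp add: tt_def algebra_simps)

lemma tt_mono: "h > 0 \<Longrightarrow> i \<le> j \<Longrightarrow> tt a h i \<le> tt a h j"
  by (simp add: tt_def mult_right_mono)

lemma tt_less: "h > 0 \<Longrightarrow> i < j \<Longrightarrow> tt a h i < tt a h j"
  by (simp add: tt_def)

lemma sl_h: "h > 0 \<Longrightarrow> sl \<phi> a h i * h = \<phi> (tt a h (Suc i)) - \<phi> (tt a h i)"
  by (simp add: sl_def)

lemma sl_nonneg: "h > 0 \<Longrightarrow> mono \<phi> \<Longrightarrow> sl \<phi> a h i \<ge> 0"
proof -
  assume h: "h > 0" and m: "mono \<phi>"
  have "\<phi> (tt a h i) \<le> \<phi> (tt a h (Suc i))" by (rule monoD[OF m]) (use h in \<open>simp add: tt_Suc\<close>)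
  then show ?thesis unfolding sl_def using h by simp
qed

lemma sl_mono_step:
  assumes "h > 0" "convex_on UNIV \<phi>"
  shows "sl \<phi> a h i \<le> sl \<phi> a h (Suc i)"
proof -
  let ?x = "tt a h i" and ?t = "tt a h (Suc i)" and ?y = "tt a h (Suc (Suc i))"
  have lt: "?x < ?t" "?t < ?y" using assms by (simp_all add: tt_Suc)
  from convex_on_slope_le[OF assms(2) _ _ lt] have
    "(\<phi> ?x - \<phi> ?t) / (?x - ?t) \<le> (\<phi> ?t - \<phi> ?y) / (?t - ?y)" by (meson UNIV_I order_trans)
  then have "(\<phi> ?t - \<phi> ?x) / (?t - ?x) \<le> (\<phi> ?y - \<phi> ?t) / (?y - ?t)" by (simp only: sw)
  moreover have "?t - ?x = h" "?y - ?t = h" by (simp_all add: tt_Suc)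
  ultimately show ?thesis unfolding sl_def by simp
qed

lemma cc_nonneg:
  assumes "h > 0" "convex_on UNIV \<phi>" "mono \<phi>"
  shows "cc \<phi> a h i \<ge> 0"
proof (cases i)
  case 0 then show ?thesis using sl_nonneg[OF assms(1,3)] by (simp add: cc_def)
next
  case (Suc k) then show ?thesis using sl_mono_step[OF assms(1,2), of a k] by (simp add: cc_def)
qed

lemma JJ_nonneg:
  assumes "h > 0" "convex_on UNIV \<phi>" "mono \<phi>"
  shows "JJ \<phi> a h m x \<ge> 0"
  unfolding JJ_def using cc_nonneg[OF assms] by (intro sum_nonneg) simp

lemma JJ_trunc:
  assumes "h > 0" "k \<le> m" "x \<le> tt a h (Suc k)"
  shows "JJ \<phi> a h m x = JJ \<phi> a h k x"
proof -
  have "{..<m} = {..<k} \<union> {k..<m}" by (rule sym[OF ivl_disj_un_one(2)[OF assms(2)]])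
  then have "JJ \<phi> a h m x = JJ \<phi> a h k x + (\<Sum>j\<in>{k..<m}. cc \<phi> a h j * max (x - tt a h (Suc j)) 0)"
    unfolding JJ_def by (subst sum.union_disjoint[symmetric]) (auto simp only: finite_lessThan finite_atLeastLessThan ivl_disj_int)
  also have "(\<Sum>j\<in>{k..<m}. cc \<phi> a h j * max (x - tt a h (Suc j)) 0) = 0"
  proof (intro sum.neutral ballI)
    fix j assume "j \<in> {k..<m}"
    then have "tt a h (Suc k) \<le> tt a h (Suc j)" using assms(1) by (intro tt_mono) auto
    then show "cc \<phi> a h j * max (x - tt a h (Suc j)) 0 = 0" using assms(3) by simp
  qed
  finally show ?thesis by simp
qed

lemma JJ_formula:
  assumes "h > 0" "x \<ge> tt a h (Suc n)"
  shows "JJ \<phi> a h (Suc n) x = \<phi> (tt a h n) - \<phi> (tt a h 0) + sl \<phi> a h n * (x - tt a h (Suc n))"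
  using assms(2)
proof (induction n)
  case 0
  then show ?case by (simp add: JJ_def cc_def)
next
  case (Suc n)
  have le: "x \<ge> tt a h (Suc n)" using Suc.prems assms(1) tt_mono[of h "Suc n" "Suc (Suc n)" a] by simp
  have "JJ \<phi> a h (Suc (Suc n)) x = JJ \<phi> a h (Suc n) x + cc \<phi> a h (Suc n) * (x - tt a h (Suc (Suc n)))"
    using Suc.prems by (simp add: JJ_def)
  also have "\<dots> = \<phi> (tt a h n) - \<phi> (tt a h 0) + sl \<phi> a h n * (x - tt a h (Suc n))
      + (sl \<phi> a h (Suc n) - sl \<phi> a h n) * (x - tt a h (Suc (Suc n)))"
    using Suc.IH[OF le] by (simp add: cc_def)
  also have "\<dots> = \<phi> (tt a h n) - \<phi> (tt a h 0) + sl \<phi> a h n * h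
      + sl \<phi> a h (Suc n) * (x - tt a h (Suc (Suc n)))"
    by (simp add: tt_Suc algebra_simps)
  also have "\<dots> = \<phi> (tt a h (Suc n)) - \<phi> (tt a h 0) + sl \<phi> a h (Suc n) * (x - tt a h (Suc (Suc n)))"
    using sl_h[OF assms(1), of \<phi> a n] by simp
  finally show ?case .
qed

lemma grid_index:
  assumes "h > 0" "1 \<le> m" "tt a h 1 \<le> x"
  shows "\<exists>K. 1 \<le> K \<and> K \<le> m \<and> tt a h K \<le> x \<and> (x \<le> tt a h (Suc K) \<or> K = m)"
proof -
  define S where "S = {K. K \<le> m \<and> tt a h K \<le> x}"
  have fin: "finite S" unfolding S_def by auto
  have "1 \<in> S" using assms unfolding S_def by auto
  define K where "K = Max S"
  have KS: "K \<in> S" using fin \<open>1 \<in> S\<close> unfolding K_def by (intro Max_in) auto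
  have K1: "1 \<le> K" using fin \<open>1 \<in> S\<close> unfolding K_def by (simp add: Max_ge)
  show ?thesis
  proof (intro exI conjI)
    show "1 \<le> K" by fact
    show "K \<le> m" "tt a h K \<le> x" using KS unfolding S_def by auto
    show "x \<le> tt a h (Suc K) \<or> K = m"
    proof (rule ccontr)
      assume "\<not> (x \<le> tt a h (Suc K) \<or> K = m)"
      then have "Suc K \<in> S" using KS unfolding S_def by auto
      then have "Suc K \<le> K" using fin unfolding K_def by (simp add: Max_ge)
      then show False by simp
    qed
  qed
qed

lemma JJ_at_index:
  assumes "h > 0" "1 \<le> K" "K \<le> m" "tt a h K \<le> x" "x \<le> tt a h (Suc K) \<or> K = m"
  shows "JJ \<phi> a h m x = \<phi> (tt a h (K - 1)) - \<phi> (tt a h 0) + sl \<phi> a h (K - 1) * (x - tt a h K)"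
proof -
  have "JJ \<phi> a h m x = JJ \<phi> a h K x"
    using assms(5) JJ_trunc[OF assms(1,3)] by auto
  also have "\<dots> = \<phi> (tt a h (K - 1)) - \<phi> (tt a h 0) + sl \<phi> a h (K - 1) * (x - tt a h K)"
  proof -
    have SK: "Suc (K - 1) = K" using assms(2) by simp
    show ?thesis using JJ_formula[OF assms(1), where n = "K - 1" and x = x and \<phi> = \<phi> and a = a] assms(2,4)
      unfolding SK by simp
  qed
  finally show ?thesis .
qed

lemma slope_below_gen:
  fixes \<phi> :: "real \<Rightarrow> real"
  assumes cv: "convex_on UNIV \<phi>" and pq: "p < q" and qx: "q \<le> x"
  shows "\<phi> q + ((\<phi> q - \<phi> p) / (q - p)) * (x - q) \<le> \<phi> x"
proof (cases "x = q")
  case True then show ?thesis by simp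
next
  case False
  then have lt2: "q < x" using qx by simp
  have "(\<phi> p - \<phi> q) / (p - q) \<le> (\<phi> q - \<phi> x) / (q - x)"
    using convex_on_slope_le[OF cv UNIV_I UNIV_I pq lt2] by (rule order_trans)
  then have "(\<phi> q - \<phi> p) / (q - p) \<le> (\<phi> x - \<phi> q) / (x - q)" by (simp only: sw)
  then have "((\<phi> q - \<phi> p) / (q - p)) * (x - q) \<le> \<phi> x - \<phi> q"
    using lt2 by (simp add: pos_le_divide_eq)
  then show ?thesis by simp
qed

lemma slope_below:
  assumes "h > 0" "convex_on UNIV \<phi>" "tt a h (Suc k) \<le> x"
  shows "\<phi> (tt a h (Suc k)) + sl \<phi> a h k * (x - tt a h (Suc k)) \<le> \<phi> x"
proof -
  have e: "tt a h (Suc k) - tt a h k = h" by (simp add: tt_Suc)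
  have lt: "tt a h k < tt a h (Suc k)" using assms(1) by (simp add: tt_Suc)
  show ?thesis using slope_below_gen[OF assms(2) lt assms(3)] unfolding sl_def e .
qed

lemma arith_aux1:
  fixes J A B C P D Q :: real
  shows "J = A - B + C \<Longrightarrow> A = P - D \<Longrightarrow> 0 \<le> D \<Longrightarrow> 0 \<le> B \<Longrightarrow> P + C \<le> Q \<Longrightarrow> J \<le> Q"
  by linarith

lemma arith_aux2:
  fixes J A B C E :: real
  shows "J = A - B + C \<Longrightarrow> E \<le> A \<Longrightarrow> 0 \<le> C \<Longrightarrow> E - B \<le> J"
  by linarith

lemma JJ_upper:
  assumes "h > 0" "convex_on UNIV \<phi>" "mono \<phi>" "\<And>y. \<phi> y \<ge> 0"
  shows "JJ \<phi> a h m x \<le> \<phi> x"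
proof (cases "1 \<le> m \<and> tt a h 1 \<le> x")
  case False
  then have "JJ \<phi> a h m x = 0"
  proof (cases "1 \<le> m")
    case True
    then have "x \<le> tt a h (Suc 0)" using False by simp
    then have "JJ \<phi> a h m x = JJ \<phi> a h 0 x" using assms(1) by (intro JJ_trunc) auto
    then show ?thesis by (simp add: JJ_def)
  next
    case False then have "m = 0" by simp
    then show ?thesis by (simp add: JJ_def)
  qed
  then show ?thesis using assms(4) by simp
next
  case True
  then have m1: "1 \<le> m" and x1: "tt a h 1 \<le> x" by auto
  obtain K where K: "1 \<le> K" "K \<le> m" "tt a h K \<le> x" "x \<le> tt a h (Suc K) \<or> K = m"
    using grid_index[OF assms(1) m1 x1] by blast
  obtain k where k: "K = Suc k" using K(1) by (cases K) auto
  have 3: "JJ \<phi> a h m x = \<phi> (tt a h k) - \<phi> (tt a h 0) + sl \<phi> a h k * (x - tt a h (Suc k))"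
    using JJ_at_index[OF assms(1) K] unfolding k by simp
  have 4: "\<phi> (tt a h k) = \<phi> (tt a h (Suc k)) - sl \<phi> a h k * h"
    using sl_h[OF assms(1), of \<phi> a k] by simp
  have 5: "0 \<le> sl \<phi> a h k * h"
    using mult_nonneg_nonneg[OF sl_nonneg[OF assms(1,3), of a k], of h] assms(1) by simp
  have 6: "0 \<le> \<phi> (tt a h 0)" by (rule assms(4))
  have 7: "\<phi> (tt a h (Suc k)) + sl \<phi> a h k * (x - tt a h (Suc k)) \<le> \<phi> x"
    using slope_below[OF assms(1,2)] K(3) unfolding k by simp
  show ?thesis by (rule arith_aux1[OF 3 4 5 6 7])
qed

lemma JJ_lower:
  assumes "h > 0" "convex_on UNIV \<phi>" "mono \<phi>" "1 \<le> m" "tt a h 1 \<le> x" "x \<le> tt a h m"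
  shows "\<phi> (x - 2 * h) - \<phi> (tt a h 0) \<le> JJ \<phi> a h m x"
proof -
  obtain K where K: "1 \<le> K" "K \<le> m" "tt a h K \<le> x" "x \<le> tt a h (Suc K) \<or> K = m"
    using grid_index[OF assms(1,4,5)] by blast
  have xle: "x \<le> tt a h (Suc K)"
  proof (cases "K = m")
    case True
    have "tt a h m \<le> tt a h (Suc m)" using assms(1) by (rule tt_mono) simp
    then show ?thesis using True assms(6) by simp
  next
    case False then show ?thesis using K(4) by simp
  qed
  obtain k where k: "K = Suc k" using K(1) by (cases K) auto
  have "tt a h k = tt a h (Suc K) - 2 * h" unfolding k by (simp add: tt_Suc)
  then have "x - 2 * h \<le> tt a h k" using xle by simp
  then have 1: "\<phi> (x - 2 * h) \<le> \<phi> (tt a h k)" by (rule monoD[OF assms(3)])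
  have 2: "0 \<le> sl \<phi> a h k * (x - tt a h (Suc k))"
    using sl_nonneg[OF assms(1,3), of a k] K(3) unfolding k by simp
  have 3: "JJ \<phi> a h m x = \<phi> (tt a h k) - \<phi> (tt a h 0) + sl \<phi> a h k * (x - tt a h (Suc k))"
    using JJ_at_index[OF assms(1) K] unfolding k by simp
  show ?thesis by (rule arith_aux2[OF 3 1 2])
qed



lemma JJ_integral:
  assumes h: "h > 0" and cv: "convex_on UNIV \<phi>" and mo: "mono \<phi>" and mV: "V \<in> borel_measurable P"
  shows "(\<integral>\<^sup>+\<omega>. ennreal (JJ \<phi> a h m (V \<omega>)) \<partial>P) =
         (\<Sum>j<m. ennreal (cc \<phi> a h j) * (\<integral>\<^sup>+\<omega>. ennreal (V \<omega> - tt a h (Suc j)) \<partial>P))"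
proof -
  have c: "cc \<phi> a h j \<ge> 0" for j by (rule cc_nonneg[OF h cv mo])
  have mh[measurable]: "(\<lambda>\<omega>. ennreal (V \<omega> - r)) \<in> borel_measurable P" for r using mV by measurable
  have pt: "ennreal (JJ \<phi> a h m x) = (\<Sum>j<m. ennreal (cc \<phi> a h j) * ennreal (x - tt a h (Suc j)))" for x
  proof -
    have "ennreal (JJ \<phi> a h m x) = (\<Sum>j<m. ennreal (cc \<phi> a h j * max (x - tt a h (Suc j)) 0))"
      unfolding JJ_def using c by (subst sum_ennreal) auto
    also have "\<dots> = (\<Sum>j<m. ennreal (cc \<phi> a h j) * ennreal (x - tt a h (Suc j)))"
      using c by (intro sum.cong refl) (simp add: ennreal_mult enn_max0)
    finally show ?thesis .
  qed
  have "(\<integral>\<^sup>+\<omega>. ennreal (JJ \<phi> a h m (V \<omega>)) \<partial>P) =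
        (\<integral>\<^sup>+\<omega>. (\<Sum>j<m. ennreal (cc \<phi> a h j) * ennreal (V \<omega> - tt a h (Suc j))) \<partial>P)"
    by (simp only: pt)
  also have "\<dots> = (\<Sum>j<m. (\<integral>\<^sup>+\<omega>. ennreal (cc \<phi> a h j) * ennreal (V \<omega> - tt a h (Suc j)) \<partial>P))"
    by (intro nn_integral_sum) measurable
  also have "\<dots> = (\<Sum>j<m. ennreal (cc \<phi> a h j) * (\<integral>\<^sup>+\<omega>. ennreal (V \<omega> - tt a h (Suc j)) \<partial>P))"
    by (intro sum.cong refl nn_integral_cmult) measurable
  finally show ?thesis .
qed

lemma core:
  fixes \<phi> :: "real \<Rightarrow> real" and A :: "'a \<Rightarrow> real" and B :: "'b \<Rightarrow> real"
  assumes cv: "convex_on UNIV \<phi>" and mo: "mono \<phi>" and nn: "\<And>x. \<phi> x \<ge> 0"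
    and z: "\<And>x. x \<le> c \<Longrightarrow> \<phi> x = 0"
    and mA: "A \<in> borel_measurable P" and mB: "B \<in> borel_measurable Q"
    and sl: "\<And>t. (\<integral>\<^sup>+\<omega>. ennreal (A \<omega> - t) \<partial>P) \<le> (\<integral>\<^sup>+\<omega>. ennreal (B \<omega> - t) \<partial>Q)"
  shows "(\<integral>\<^sup>+\<omega>. ennreal (\<phi> (A \<omega>)) \<partial>P) \<le> (\<integral>\<^sup>+\<omega>. ennreal (\<phi> (B \<omega>)) \<partial>Q)"
proof -
  define hn where "hn n = inverse (real (Suc n))" for n
  define an where "an n = - real (Suc n)" for n
  define mn :: "nat \<Rightarrow> nat" where "mn n = 2 * (Suc n)^2" for n
  define F where "F n x = JJ \<phi> (an n) (hn n) (mn n) x" for n x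
  have hpos: "hn n > 0" for n unfolding hn_def by simp
  have tt0: "tt (an n) (hn n) 0 = an n" for n by (simp add: tt_def)
  have tt1: "tt (an n) (hn n) 1 = an n + hn n" for n by (simp add: tt_def)
  have ttm: "tt (an n) (hn n) (mn n) = real (Suc n)" for n
    unfolding tt_def an_def hn_def mn_def by (simp add: power2_eq_square field_simps)
  have m1: "1 \<le> mn n" for n unfolding mn_def by simp
  have Fle: "F n x \<le> \<phi> x" for n x unfolding F_def by (rule JJ_upper[OF hpos cv mo nn])
  have cont: "isCont \<phi> x" for x
    using convex_on_continuous[OF open_UNIV cv] continuous_on_eq_continuous_at[OF open_UNIV] by blast
  have Flim: "(\<lambda>n. F n x) \<longlonglongrightarrow> \<phi> x" for x
  proof (rule tendsto_sandwich)
    obtain N :: nat where N: "real N \<ge> \<bar>x\<bar> + \<bar>c\<bar> + 2" using real_arch_simple by blast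
    have ev: "\<forall>\<^sub>F n in sequentially. n \<ge> N" by (rule eventually_ge_at_top)
    show "\<forall>\<^sub>F n in sequentially. \<phi> (x - 2 * hn n) \<le> F n x"
      using ev
    proof eventually_elim
      case (elim n)
      have hle: "hn n \<le> 1" unfolding hn_def by (simp add: field_simps)
      have "real N \<le> real n" using elim by simp
      then have a1: "an n \<le> c" "an n + hn n \<le> x" "x \<le> real (Suc n)"
        using N hle unfolding an_def by auto
      have "\<phi> (x - 2 * hn n) - \<phi> (tt (an n) (hn n) 0) \<le> F n x"
        unfolding F_def by (rule JJ_lower[OF hpos cv mo m1]) (use a1 tt1 ttm in auto)
      moreover have "\<phi> (tt (an n) (hn n) 0) = 0" unfolding tt0 using a1 z by simp
      ultimately show ?case by simp
    qed
    show "\<forall>\<^sub>F n in sequentially. F n x \<le> \<phi> x" using Fle by simp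
    have "(\<lambda>n. x - 2 * hn n) \<longlonglongrightarrow> x - 2 * 0"
      unfolding hn_def by (intro tendsto_intros LIMSEQ_inverse_real_of_nat)
    then show "(\<lambda>n. \<phi> (x - 2 * hn n)) \<longlonglongrightarrow> \<phi> x"
      using isCont_tendsto_compose[OF cont] by simp
    show "(\<lambda>n. \<phi> x) \<longlonglongrightarrow> \<phi> x" by simp
  qed
  have measF: "(\<lambda>\<omega>. ennreal (F n (V \<omega>))) \<in> borel_measurable R" if "V \<in> borel_measurable R" for n V and R :: "'c measure"
    unfolding F_def JJ_def using that by measurable
  have cmp: "(\<integral>\<^sup>+\<omega>. ennreal (F n (A \<omega>)) \<partial>P) \<le> (\<integral>\<^sup>+\<omega>. ennreal (F n (B \<omega>)) \<partial>Q)" for n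
    unfolding F_def JJ_integral[OF hpos cv mo mA] JJ_integral[OF hpos cv mo mB]
    by (intro sum_mono mult_left_mono sl) simp
  have liA: "liminf (\<lambda>n. ennreal (F n (A \<omega>))) = ennreal (\<phi> (A \<omega>))" for \<omega>
    by (intro lim_imp_Liminf trivial_limit_sequentially tendsto_ennrealI Flim)
  have "(\<integral>\<^sup>+\<omega>. ennreal (\<phi> (A \<omega>)) \<partial>P) = (\<integral>\<^sup>+\<omega>. liminf (\<lambda>n. ennreal (F n (A \<omega>))) \<partial>P)"
    by (simp add: liA)
  also have "\<dots> \<le> liminf (\<lambda>n. (\<integral>\<^sup>+\<omega>. ennreal (F n (A \<omega>)) \<partial>P))"
    by (intro nn_integral_liminf measF mA)
  also have "\<dots> \<le> liminf (\<lambda>n. (\<integral>\<^sup>+\<omega>. ennreal (F n (B \<omega>)) \<partial>Q))"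
    by (intro Liminf_mono always_eventually allI cmp)
  also have "\<dots> \<le> limsup (\<lambda>n. (\<integral>\<^sup>+\<omega>. ennreal (F n (B \<omega>)) \<partial>Q))"
    by (intro Liminf_le_Limsup trivial_limit_sequentially)
  also have "\<dots> \<le> (\<integral>\<^sup>+\<omega>. ennreal (\<phi> (B \<omega>)) \<partial>Q)"
    by (intro Limsup_bounded always_eventually allI nn_integral_mono ennreal_leI Fle)
  finally show ?thesis .
qed



lemma convex_cont_meas:
  assumes "convex_on UNIV (v::real \<Rightarrow> real)"
  shows "v \<in> borel_measurable borel"
  using borel_measurable_continuous_onI[OF convex_on_continuous[OF open_UNIV assms]] .

lemma convex_max_comp:
  fixes u :: "real \<Rightarrow> real"
  assumes cv: "convex_on UNIV u" and mn: "\<And>y. u c \<le> u y"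
  shows "convex_on UNIV (\<lambda>x. u (max x c))" and "mono (\<lambda>x. u (max x c))"
proof -
  have mon: "u x \<le> u y" if "c \<le> x" "x \<le> y" for x y
  proof (cases "x = y \<or> x = c")
    case True then show ?thesis using mn by auto
  next
    case False
    then have lt: "c < x" "x < y" using that by auto
    have "(u c - u x) / (c - x) \<le> (u x - u y) / (x - y)"
      using convex_on_slope_le[OF cv UNIV_I UNIV_I lt] by (rule order_trans)
    moreover have "(u c - u x) / (c - x) \<ge> 0"
      using mn[of x] lt by (intro divide_nonpos_neg) auto
    ultimately have "0 \<le> (u x - u y) / (x - y)" by linarith
    then show ?thesis using lt by (simp add: zero_le_divide_iff)
  qed
  show "mono (\<lambda>x. u (max x c))"
    by (rule monoI) (intro mon; simp add: max_def)
  show "convex_on UNIV (\<lambda>x. u (max x c))"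
    unfolding convex_on_def
  proof (intro conjI ballI allI impI)
    fix x y a b :: real assume ab: "0 \<le> a" "0 \<le> b" "a + b = 1"
    have "max (a *\<^sub>R x + b *\<^sub>R y) c \<le> a * max x c + b * max y c"
    proof -
      have "a * x + b * y \<le> a * max x c + b * max y c"
        using ab by (intro add_mono mult_left_mono) auto
      moreover have "c \<le> a * max x c + b * max y c"
      proof -
        have "c = a * c + b * c" using ab(3) by (metis distrib_right mult_1)
        also have "\<dots> \<le> a * max x c + b * max y c"
          using ab by (intro add_mono mult_left_mono) auto
        finally show ?thesis .
      qed
      ultimately show ?thesis by simp
    qed
    then have "u (max (a *\<^sub>R x + b *\<^sub>R y) c) \<le> u (a * max x c + b * max y c)"
      by (intro mon) auto
    also have "\<dots> \<le> a * u (max x c) + b * u (max y c)"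
      using cv ab unfolding convex_on_def by (metis UNIV_I real_scaleR_def)
    finally show "u (max (a *\<^sub>R x + b *\<^sub>R y) c) \<le> a * u (max x c) + b * u (max y c)" .
  qed simp
qed

lemma convex_neg_comp:
  fixes u :: "real \<Rightarrow> real"
  assumes cv: "convex_on UNIV u"
  shows "convex_on UNIV (\<lambda>y. u (- y))"
  unfolding convex_on_def
proof (intro conjI ballI allI impI)
  fix x y a b :: real assume ab: "0 \<le> a" "0 \<le> b" "a + b = 1"
  have "- (a *\<^sub>R x + b *\<^sub>R y) = a *\<^sub>R (- x) + b *\<^sub>R (- y)" by simp
  then show "u (- (a *\<^sub>R x + b *\<^sub>R y)) \<le> a * u (- x) + b * u (- y)"
    using cv ab unfolding convex_on_def by (metis UNIV_I)
qed simp

lemma gen_exp_shift: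
  assumes P: "prob_space P" and mg: "g \<in> borel_measurable P" and g0: "\<And>\<omega>. g \<omega> \<ge> 0"
  shows "gen_expectation P (\<lambda>\<omega>. a + g \<omega>) = ereal a + enn2ereal (\<integral>\<^sup>+\<omega>. ennreal (g \<omega>) \<partial>P)"
proof -
  interpret prob_space P by (rule P)
  define Pp where "Pp = (\<integral>\<^sup>+\<omega>. ennreal (a + g \<omega>) \<partial>P)"
  define Qm where "Qm = (\<integral>\<^sup>+\<omega>. ennreal (- (a + g \<omega>)) \<partial>P)"
  define I where "I = (\<integral>\<^sup>+\<omega>. ennreal (g \<omega>) \<partial>P)"
  have pt: "ennreal (a + g \<omega>) + ennreal (- a) = ennreal (- (a + g \<omega>)) + ennreal a + ennreal (g \<omega>)" for \<omega>
  proof -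
    have "ennreal (a + g \<omega>) + ennreal (- a) = ennreal (max (a + g \<omega>) 0 + max (- a) 0)"
      by (simp add: enn_max0)
    also have "max (a + g \<omega>) 0 + max (- a) 0 = max (- (a + g \<omega>)) 0 + max a 0 + g \<omega>"
      using g0[of \<omega>] by (simp add: max_def)
    also have "ennreal \<dots> = ennreal (- (a + g \<omega>)) + ennreal a + ennreal (g \<omega>)"
      using g0[of \<omega>] by (simp add: enn_max0)
    finally show ?thesis .
  qed
  have "(\<integral>\<^sup>+\<omega>. ennreal (a + g \<omega>) + ennreal (- a) \<partial>P) = Pp + ennreal (- a)"
    unfolding Pp_def using mg by (subst nn_integral_add) (auto simp: emeasure_space_1)
  moreover have "(\<integral>\<^sup>+\<omega>. ennreal (- (a + g \<omega>)) + ennreal a + ennreal (g \<omega>) \<partial>P) = Qm + ennreal a + I"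
    unfolding Qm_def I_def using mg
    by (subst nn_integral_add, measurable, subst nn_integral_add) (auto simp: emeasure_space_1)
  ultimately have eq: "Pp + ennreal (- a) = Qm + ennreal a + I" by (simp only: pt)
  have "Qm \<le> (\<integral>\<^sup>+\<omega>. ennreal (- a) \<partial>P)"
    unfolding Qm_def using g0 by (intro nn_integral_mono ennreal_leI) auto
  then have Qle: "Qm \<le> ennreal (- a)" by (simp add: emeasure_space_1)
  then have Qfin: "Qm \<noteq> top" by (metis ennreal_neq_top top.extremum_uniqueI)
  have eq': "enn2ereal Pp + enn2ereal (ennreal (- a)) = enn2ereal Qm + enn2ereal (ennreal a) + enn2ereal I"
    using arg_cong[OF eq, of enn2ereal] by (simp add: plus_ennreal.rep_eq)
  have gen: "gen_expectation P (\<lambda>\<omega>. a + g \<omega>) = enn2ereal Pp - enn2ereal Qm"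
    unfolding gen_expectation_def Pp_def Qm_def by (simp add: enn_max0)
  show ?thesis
  proof (cases "I = top")
    case True
    then have "Pp = top" using eq by (simp add: ennreal_add_eq_top)
    then show ?thesis using True Qfin gen unfolding I_def[symmetric] by (cases "enn2ereal Qm") auto
  next
    case False
    have Pfin: "Pp \<noteq> top" using eq False Qfin by (metis ennreal_add_eq_top ennreal_neq_top)
    obtain p where p: "0 \<le> p" "Pp = ennreal p" using Pfin by (cases Pp rule: ennreal_cases) auto
    obtain q where q: "0 \<le> q" "Qm = ennreal q" using Qfin by (cases Qm rule: ennreal_cases) auto
    obtain i where i: "0 \<le> i" "I = ennreal i" using False by (cases I rule: ennreal_cases) auto
    have pqi: "enn2ereal Pp = ereal p" "enn2ereal Qm = ereal q" "enn2ereal I = ereal i"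
      using p q i by simp_all
    have "p - q = a + i"
    proof (cases "0 \<le> a")
      case True
      then have "ennreal (- a) = 0" by (simp add: ennreal_neg)
      then have "ereal p = ereal q + ereal a + ereal i" using eq' pqi True by (simp add: zero_ennreal.rep_eq)
      then show ?thesis by simp
    next
      case False
      then have "ennreal a = 0" by (simp add: ennreal_neg)
      then have "ereal p + ereal (- a) = ereal q + ereal i" using eq' pqi False by (simp add: zero_ennreal.rep_eq)
      then show ?thesis by simp
    qed
    then show ?thesis using gen pqi unfolding I_def[symmetric] by simp
  qed
qed



lemma min_case:
  fixes v :: "real \<Rightarrow> real" and T :: "'a \<Rightarrow> real" and S :: "'b \<Rightarrow> real"
  assumes M: "prob_space M" and N: "prob_space N"
    and mT: "T \<in> borel_measurable M" and mS: "S \<in> borel_measurable N"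
    and slR: "\<And>t. (\<integral>\<^sup>+\<omega>. ennreal (T \<omega> - t) \<partial>M) \<le> (\<integral>\<^sup>+\<omega>. ennreal (S \<omega> - t) \<partial>N)"
    and slL: "\<And>t. (\<integral>\<^sup>+\<omega>. ennreal (t - T \<omega>) \<partial>M) \<le> (\<integral>\<^sup>+\<omega>. ennreal (t - S \<omega>) \<partial>N)"
    and cv: "convex_on UNIV v" and mn: "\<And>y. v c \<le> v y"
  shows "gen_expectation M (\<lambda>\<omega>. v (T \<omega>)) \<le> gen_expectation N (\<lambda>\<omega>. v (S \<omega>))"
proof -
  define w where "w y = v (- y)" for y
  have cvw: "convex_on UNIV w" unfolding w_def by (rule convex_neg_comp[OF cv])
  have mnw: "w (- c) \<le> w y" for y unfolding w_def using mn[of "- y"] by simp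
  define R where "R x = v (max x c) - v c" for x
  define L where "L x = w (max x (- c)) - w (- c)" for x
  have cvR: "convex_on UNIV R" unfolding R_def
    by (intro convex_on_diff convex_max_comp(1)[OF cv mn]) (simp add: concave_on_const)
  have moR: "mono R" unfolding R_def using convex_max_comp(2)[OF cv mn] by (simp add: mono_def)
  have nnR: "R x \<ge> 0" for x unfolding R_def using mn by simp
  have zR: "x \<le> c \<Longrightarrow> R x = 0" for x unfolding R_def by (simp add: max_def)
  have cvL: "convex_on UNIV L" unfolding L_def
    by (intro convex_on_diff convex_max_comp(1)[OF cvw mnw]) (simp add: concave_on_const)
  have moL: "mono L" unfolding L_def using convex_max_comp(2)[OF cvw mnw] by (simp add: mono_def)
  have nnL: "L x \<ge> 0" for x unfolding L_def using mnw by simp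
  have zL: "x \<le> - c \<Longrightarrow> L x = 0" for x unfolding L_def by (simp add: max_def)
  have dec: "v x = v c + (R x + L (- x))" for x
    unfolding R_def L_def w_def by (cases "c \<le> x") (auto simp: max_def)
  have mR[measurable]: "R \<in> borel_measurable borel" by (rule convex_cont_meas[OF cvR])
  have mL[measurable]: "L \<in> borel_measurable borel" by (rule convex_cont_meas[OF cvL])
  have mT'[measurable]: "T \<in> borel_measurable M" by (rule mT)
  have mS'[measurable]: "S \<in> borel_measurable N" by (rule mS)
  have slL': "(\<integral>\<^sup>+\<omega>. ennreal (- T \<omega> - t) \<partial>M) \<le> (\<integral>\<^sup>+\<omega>. ennreal (- S \<omega> - t) \<partial>N)" for t
  proof -
    have e1: "\<And>\<omega>. - T \<omega> - t = - t - T \<omega>" and e2: "\<And>\<omega>. - S \<omega> - t = - t - S \<omega>" by linarith+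
    show ?thesis unfolding e1 e2 by (rule slL)
  qed
  have gT: "gen_expectation M (\<lambda>\<omega>. v (T \<omega>)) = ereal (v c) +
      enn2ereal (\<integral>\<^sup>+\<omega>. ennreal (R (T \<omega>) + L (- T \<omega>)) \<partial>M)"
  proof -
    have "(\<lambda>\<omega>. v (T \<omega>)) = (\<lambda>\<omega>. v c + (R (T \<omega>) + L (- T \<omega>)))" by (rule ext) (rule dec)
    then show ?thesis by (simp only:) (rule gen_exp_shift[OF M], measurable, use nnR nnL in \<open>auto intro: add_nonneg_nonneg\<close>)
  qed
  have gS: "gen_expectation N (\<lambda>\<omega>. v (S \<omega>)) = ereal (v c) +
      enn2ereal (\<integral>\<^sup>+\<omega>. ennreal (R (S \<omega>) + L (- S \<omega>)) \<partial>N)"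
  proof -
    have "(\<lambda>\<omega>. v (S \<omega>)) = (\<lambda>\<omega>. v c + (R (S \<omega>) + L (- S \<omega>)))" by (rule ext) (rule dec)
    then show ?thesis by (simp only:) (rule gen_exp_shift[OF N], measurable, use nnR nnL in \<open>auto intro: add_nonneg_nonneg\<close>)
  qed
  have "(\<integral>\<^sup>+\<omega>. ennreal (R (T \<omega>) + L (- T \<omega>)) \<partial>M) =
        (\<integral>\<^sup>+\<omega>. ennreal (R (T \<omega>)) \<partial>M) + (\<integral>\<^sup>+\<omega>. ennreal (L (- T \<omega>)) \<partial>M)"
    using nnR nnL by (subst nn_integral_add[symmetric]) auto
  also have "\<dots> \<le> (\<integral>\<^sup>+\<omega>. ennreal (R (S \<omega>)) \<partial>N) + (\<integral>\<^sup>+\<omega>. ennreal (L (- S \<omega>)) \<partial>N)"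
  proof (rule add_mono)
    show "(\<integral>\<^sup>+\<omega>. ennreal (R (T \<omega>)) \<partial>M) \<le> (\<integral>\<^sup>+\<omega>. ennreal (R (S \<omega>)) \<partial>N)"
      by (rule core[OF cvR moR nnR zR mT mS slR])
    show "(\<integral>\<^sup>+\<omega>. ennreal (L (- T \<omega>)) \<partial>M) \<le> (\<integral>\<^sup>+\<omega>. ennreal (L (- S \<omega>)) \<partial>N)"
      by (rule core[OF cvL moL nnL zL _ _ slL']) measurable
  qed
  also have "\<dots> = (\<integral>\<^sup>+\<omega>. ennreal (R (S \<omega>) + L (- S \<omega>)) \<partial>N)"
    using nnR nnL by (subst nn_integral_add[symmetric]) auto
  finally have le: "(\<integral>\<^sup>+\<omega>. ennreal (R (T \<omega>) + L (- T \<omega>)) \<partial>M) \<le> (\<integral>\<^sup>+\<omega>. ennreal (R (S \<omega>) + L (- S \<omega>)) \<partial>N)" .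
  show ?thesis unfolding gT gS
    by (intro add_left_mono) (use le in \<open>simp add: less_eq_ennreal.rep_eq\<close>)
qed



lemma convex_max_const:
  fixes u :: "real \<Rightarrow> real"
  assumes cv: "convex_on UNIV u"
  shows "convex_on UNIV (\<lambda>x. max (u x) m)"
  unfolding convex_on_def
proof (intro conjI ballI allI impI)
  fix x y a b :: real assume ab: "0 \<le> a" "0 \<le> b" "a + b = 1"
  have "u (a *\<^sub>R x + b *\<^sub>R y) \<le> a * u x + b * u y"
    using cv ab unfolding convex_on_def by blast
  also have "\<dots> \<le> a * max (u x) m + b * max (u y) m"
    using ab by (intro add_mono mult_left_mono) auto
  finally have 1: "u (a *\<^sub>R x + b *\<^sub>R y) \<le> a * max (u x) m + b * max (u y) m" .
  have "m = a * m + b * m" using ab(3) by (metis distrib_right mult_1)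
  also have "\<dots> \<le> a * max (u x) m + b * max (u y) m"
    using ab by (intro add_mono mult_left_mono) auto
  finally show "max (u (a *\<^sub>R x + b *\<^sub>R y)) m \<le> a * max (u x) m + b * max (u y) m"
    using 1 by simp
qed simp

lemma enn2ereal_mono: "x \<le> y \<Longrightarrow> enn2ereal x \<le> enn2ereal y"
  by (simp add: less_eq_ennreal.rep_eq)

lemma gen_case:
  fixes u :: "real \<Rightarrow> real" and T :: "'a \<Rightarrow> real" and S :: "'b \<Rightarrow> real"
  assumes M: "prob_space M" and N: "prob_space N"
    and mT: "T \<in> borel_measurable M" and mS: "S \<in> borel_measurable N"
    and slR: "\<And>t. (\<integral>\<^sup>+\<omega>. ennreal (T \<omega> - t) \<partial>M) \<le> (\<integral>\<^sup>+\<omega>. ennreal (S \<omega> - t) \<partial>N)"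
    and slL: "\<And>t. (\<integral>\<^sup>+\<omega>. ennreal (t - T \<omega>) \<partial>M) \<le> (\<integral>\<^sup>+\<omega>. ennreal (t - S \<omega>) \<partial>N)"
    and cv: "convex_on UNIV u" and wdS: "exp_well_defined N (\<lambda>\<omega>. u (S \<omega>))"
  shows "gen_expectation M (\<lambda>\<omega>. u (T \<omega>)) \<le> gen_expectation N (\<lambda>\<omega>. u (S \<omega>))"
proof -
  interpret N: prob_space N by (rule N)
  have mu[measurable]: "u \<in> borel_measurable borel" by (rule convex_cont_meas[OF cv])
  have mS'[measurable]: "S \<in> borel_measurable N" by (rule mS)
  define a where "a = (\<integral>\<^sup>+\<omega>. ennreal (max (u (S \<omega>)) 0) \<partial>N)"
  define b where "b = (\<integral>\<^sup>+\<omega>. ennreal (max (- u (S \<omega>)) 0) \<partial>N)"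
  have gS: "gen_expectation N (\<lambda>\<omega>. u (S \<omega>)) = enn2ereal a - enn2ereal b"
    unfolding gen_expectation_def a_def b_def ..
  show ?thesis
  proof (cases "a = top")
    case True
    then have "b < top" using wdS unfolding exp_well_defined_def a_def b_def by auto
    then have "gen_expectation N (\<lambda>\<omega>. u (S \<omega>)) = \<infinity>" unfolding gS using True
      by (cases "enn2ereal b") (auto simp: less_top)
    then show ?thesis by simp
  next
    case afin: False
    have cont: "continuous_on UNIV u" by (rule convex_on_continuous[OF open_UNIV cv])
    have "\<exists>c. c \<in> {- real k..real k} \<and> (\<forall>y\<in>{- real k..real k}. u c \<le> u y)" for k :: nat
      using continuous_attains_inf[OF compact_Icc, of "- real k" "real k" u] continuous_on_subset[OF cont]
      by force
    then obtain c where c: "\<And>k. c k \<in> {- real k..real k}" "\<And>k y. y \<in> {- real k..real k} \<Longrightarrow> u (c k) \<le> u y"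
      by metis
    define C where "C = max (u 0) 0"
    define uk where "uk k x = max (u x) (u (c k))" for k x
    define A where "A k = {\<omega> \<in> space N. real k < \<bar>S \<omega>\<bar>}" for k :: nat
    define Ik where "Ik k = (\<integral>\<^sup>+\<omega>. ennreal (max (- u (S \<omega>)) 0) * indicator {\<omega> \<in> space N. \<bar>S \<omega>\<bar> \<le> real k} \<omega> \<partial>N)" for k :: nat
    have Asets: "A k \<in> sets N" for k unfolding A_def by measurable
    have ukc: "u (c k) \<le> u 0" for k using c(2)[of 0 k] by simp
    have bound: "gen_expectation M (\<lambda>\<omega>. u (T \<omega>)) \<le>
        enn2ereal (a + ennreal C * emeasure N (A k)) - enn2ereal (Ik k)" for k
    proof -
      have cvk: "convex_on UNIV (uk k)" unfolding uk_def by (rule convex_max_const[OF cv])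
      have mnk: "uk k (c k) \<le> uk k y" for y unfolding uk_def by simp
      have step1: "gen_expectation M (\<lambda>\<omega>. u (T \<omega>)) \<le> gen_expectation M (\<lambda>\<omega>. uk k (T \<omega>))"
        unfolding gen_expectation_def uk_def
        by (intro ereal_minus_mono enn2ereal_mono nn_integral_mono ennreal_leI) auto
      have step2: "gen_expectation M (\<lambda>\<omega>. uk k (T \<omega>)) \<le> gen_expectation N (\<lambda>\<omega>. uk k (S \<omega>))"
        by (rule min_case[OF M N mT mS slR slL cvk mnk])
      have P: "(\<integral>\<^sup>+\<omega>. ennreal (max (uk k (S \<omega>)) 0) \<partial>N) \<le> a + ennreal C * emeasure N (A k)"
      proof -
        have "(\<integral>\<^sup>+\<omega>. ennreal (max (uk k (S \<omega>)) 0) \<partial>N) \<le>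
            (\<integral>\<^sup>+\<omega>. ennreal (max (u (S \<omega>)) 0) + ennreal C * indicator (A k) \<omega> \<partial>N)"
        proof (rule nn_integral_mono)
          fix \<omega> assume \<omega>: "\<omega> \<in> space N"
          show "ennreal (max (uk k (S \<omega>)) 0) \<le> ennreal (max (u (S \<omega>)) 0) + ennreal C * indicator (A k) \<omega>"
          proof (cases "\<bar>S \<omega>\<bar> \<le> real k")
            case True
            then have "u (c k) \<le> u (S \<omega>)" by (intro c(2)) auto
            then have "uk k (S \<omega>) = u (S \<omega>)" unfolding uk_def by simp
            then show ?thesis by simp
          next
            case False
            then have ind: "indicator (A k) \<omega> = (1::ennreal)" using \<omega> unfolding A_def by simp
            have "max (uk k (S \<omega>)) 0 \<le> max (u (S \<omega>)) 0 + C"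
              using ukc[of k] unfolding uk_def C_def by linarith
            then have "ennreal (max (uk k (S \<omega>)) 0) \<le> ennreal (max (u (S \<omega>)) 0 + C)"
              by (rule ennreal_leI)
            also have "\<dots> = ennreal (max (u (S \<omega>)) 0) + ennreal C"
              unfolding C_def by (rule ennreal_plus) auto
            finally show ?thesis using ind by simp
          qed
        qed
        also have "\<dots> = a + ennreal C * emeasure N (A k)"
          unfolding a_def using Asets by (subst nn_integral_add) (auto simp: nn_integral_cmult_indicator)
        finally show ?thesis .
      qed
      have Q: "Ik k \<le> (\<integral>\<^sup>+\<omega>. ennreal (max (- uk k (S \<omega>)) 0) \<partial>N)"
        unfolding Ik_def
      proof (rule nn_integral_mono)
        fix \<omega> assume \<omega>: "\<omega> \<in> space N"
        show "ennreal (max (- u (S \<omega>)) 0) * indicator {\<omega> \<in> space N. \<bar>S \<omega>\<bar> \<le> real k} \<omega>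
            \<le> ennreal (max (- uk k (S \<omega>)) 0)"
        proof (cases "\<bar>S \<omega>\<bar> \<le> real k")
          case True
          then have "u (c k) \<le> u (S \<omega>)" by (intro c(2)) auto
          then have "uk k (S \<omega>) = u (S \<omega>)" unfolding uk_def by simp
          then show ?thesis using True \<omega> by simp
        next
          case False then show ?thesis by simp
        qed
      qed
      have step3: "gen_expectation N (\<lambda>\<omega>. uk k (S \<omega>)) \<le>
          enn2ereal (a + ennreal C * emeasure N (A k)) - enn2ereal (Ik k)"
        unfolding gen_expectation_def by (intro ereal_minus_mono enn2ereal_mono P Q)
      show ?thesis using step1 step2 step3 by (meson order_trans)
    qed
    have lim1: "(\<lambda>k. emeasure N (A k)) \<longlonglongrightarrow> 0"
    proof -
      have "(\<lambda>k. emeasure N (A k)) \<longlonglongrightarrow> emeasure N (\<Inter>k. A k)"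
      proof (rule Lim_emeasure_decseq)
        show "range A \<subseteq> sets N" using Asets by auto
        show "decseq A" unfolding decseq_def A_def by auto
        show "emeasure N (A k) \<noteq> \<infinity>" for k by (simp add: N.emeasure_eq_measure)
      qed
      moreover have "(\<Inter>k. A k) = {}"
      proof -
        have "\<omega> \<notin> A (nat \<lceil>\<bar>S \<omega>\<bar>\<rceil>)" for \<omega> unfolding A_def by (simp add: not_less)
        then show ?thesis by blast
      qed
      ultimately show ?thesis by simp
    qed
    define g where "g \<omega> = ennreal (max (- u (S \<omega>)) 0) * indicator (space N) \<omega>" for \<omega>
    have lim2: "(\<lambda>k. Ik k) \<longlonglongrightarrow> b"
    proof -
      have "(\<lambda>k. Ik k) \<longlonglongrightarrow> (\<integral>\<^sup>+\<omega>. g \<omega> \<partial>N)"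
        unfolding Ik_def
      proof (rule nn_integral_LIMSEQ)
        show "incseq (\<lambda>k \<omega>. ennreal (max (- u (S \<omega>)) 0) * indicator {\<omega> \<in> space N. \<bar>S \<omega>\<bar> \<le> real k} \<omega>)"
          by (auto simp: incseq_def le_fun_def intro!: mult_left_mono split: split_indicator)
        show "(\<lambda>\<omega>. ennreal (max (- u (S \<omega>)) 0) * indicator {\<omega> \<in> space N. \<bar>S \<omega>\<bar> \<le> real k} \<omega>) \<in> borel_measurable N" for k
          by measurable
        show "(\<lambda>k. ennreal (max (- u (S \<omega>)) 0) * indicator {\<omega> \<in> space N. \<bar>S \<omega>\<bar> \<le> real k} \<omega>) \<longlonglongrightarrow> g \<omega>" for \<omega>
        proof (rule tendsto_eventually)
          show "\<forall>\<^sub>F k in sequentially. ennreal (max (- u (S \<omega>)) 0) * indicator {\<omega> \<in> space N. \<bar>S \<omega>\<bar> \<le> real k} \<omega> = g \<omega>"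
            using eventually_ge_at_top[of "nat \<lceil>\<bar>S \<omega>\<bar>\<rceil>"]
          proof eventually_elim
            case (elim k)
            then have "\<bar>S \<omega>\<bar> \<le> real k" by linarith
            then show ?case unfolding g_def by (simp split: split_indicator)
          qed
        qed
      qed
      moreover have "(\<integral>\<^sup>+\<omega>. g \<omega> \<partial>N) = b"
        unfolding b_def g_def by (intro nn_integral_cong) simp
      ultimately show ?thesis by simp
    qed
    have lim3: "(\<lambda>k. enn2ereal (a + ennreal C * emeasure N (A k))) \<longlonglongrightarrow> enn2ereal a"
    proof -
      have "(\<lambda>k. a + ennreal C * emeasure N (A k)) \<longlonglongrightarrow> a + ennreal C * 0"
        by (intro tendsto_add tendsto_const ennreal_tendsto_cmult lim1) simp
      then show ?thesis by simp
    qed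
    have lim: "(\<lambda>k. enn2ereal (a + ennreal C * emeasure N (A k)) - enn2ereal (Ik k)) \<longlonglongrightarrow> enn2ereal a - enn2ereal b"
    proof (rule tendsto_diff_ereal_general[OF lim3])
      show "(\<lambda>k. enn2ereal (Ik k)) \<longlonglongrightarrow> enn2ereal b" using lim2 by simp
      show "\<not> (enn2ereal a = \<infinity> \<and> enn2ereal b = \<infinity> \<or> enn2ereal a = - \<infinity> \<and> enn2ereal b = - \<infinity>)"
        using afin by simp
    qed
    show ?thesis unfolding gS by (rule LIMSEQ_le_const[OF lim]) (use bound in blast)
  qed
qed


theorem theorem4:
  fixes M :: "'a measure" and N :: "'b measure"
    and X Y Z W :: "'a \<Rightarrow> real" and Zco Wco :: "'b \<Rightarrow> real"
  assumes "prob_space M" and "atomless M"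
    and "X \<in> borel_measurable M" and "Y \<in> borel_measurable M"
    and "Z \<in> borel_measurable M" and "W \<in> borel_measurable M"
    and "cx_le M X M Z" and "cx_le M Y M W"
    and "prob_space N"
    and "Zco \<in> borel_measurable N" and "Wco \<in> borel_measurable N"
    and "comonotonic N Zco Wco"
    and "distr N borel Zco = distr M borel Z" and "distr N borel Wco = distr M borel W"
  shows "cx_le M (\<lambda>\<omega>. X \<omega> + Y \<omega>) N (\<lambda>\<omega>. Zco \<omega> + Wco \<omega>)"
proof -
  have mT: "(\<lambda>\<omega>. X \<omega> + Y \<omega>) \<in> borel_measurable M" using assms(3,4) by measurable
  have mS: "(\<lambda>\<omega>. Zco \<omega> + Wco \<omega>) \<in> borel_measurable N" using assms(10,11) by measurable
  note sl = stoploss_sum[OF assms(3-6) assms(10,11) assms(7,8) assms(12-14)]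
  show ?thesis unfolding cx_le_def
  proof (intro allI impI)
    fix u :: "real \<Rightarrow> real"
    assume cv: "convex_on UNIV u"
      and wdT: "exp_well_defined M (\<lambda>x. u (X x + Y x))"
      and wdS: "exp_well_defined N (\<lambda>x. u (Zco x + Wco x))"
    show "gen_expectation M (\<lambda>x. u (X x + Y x)) \<le> gen_expectation N (\<lambda>x. u (Zco x + Wco x))"
      by (rule gen_case[OF assms(1) assms(9) mT mS sl(1) sl(2) cv wdS])
  qed
qed

end
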